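(* Let $\mathbb{K}\in\{\mathbb{R},\mathbb{C}\}$, $\star\in\{*,T\}$, $\epsilon_1,\epsilon_2\in\{1,-1\}$, and let $Q(\lambda)=\lambda^2M+\lambda D+K\in\mathbb{K}^{n\times n}[\lambda]$ satisfy $M^\star=\epsilon_1M$, $D^\star=\epsilon_2D$, $K^\star=\epsilon_1K$. Let $(X,\Lambda)\in\mathbb{K}^{n\times p}\times\mathbb{K}^{p\times p}$ be an invariant pair of $Q(\lambda)$ and $S:=X^\star MX\Lambda+\epsilon_1\epsilon_2\Lambda^\star X^\star MX+X^\star DX$. Then $S^\star=\epsilon_2S$ and $S\Lambda=\epsilon_1\epsilon_2\Lambda^\star S=\epsilon_1(S\Lambda)^\star$.
   Context: For a matrix $A$, $A^*$ is the conjugate transpose and $A^T$ the transpose; $A^\star$ means $A^*$ if $\star=*$ and $A^T$ if $\star=T$. A pair $(X,\Lambda)$ is an invariant pair of $Q(\lambda)$ if $MX\Lambda^2+DX\Lambda+KX=0$. *)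

theory Defs
  imports "Jordan_Normal_Form.Matrix" "Jordan_Normal_Form.Conjugate"
begin

datatype star_op = Star | Tr

definition star_mat :: "star_op \<Rightarrow> 'a::conjugatable_field mat \<Rightarrow> 'a mat" where
  "star_mat s A = (case s of Star \<Rightarrow> transpose_mat (map_mat conjugate A)
                           | Tr \<Rightarrow> transpose_mat A)"

definition invariant_pair :: "'a::field mat \<Rightarrow> 'a mat \<Rightarrow> 'a mat \<Rightarrow> 'a mat \<Rightarrow> 'a mat \<Rightarrow> bool" where
  "invariant_pair M D K X L \<longleftrightarrow> M * X * L * L + D * X * L + K * X = 0\<^sub>m (dim_row M) (dim_col L)"

definition S_mat :: "star_op \<Rightarrow> 'a::conjugatable_field \<Rightarrow> 'a \<Rightarrow> 'a mat \<Rightarrow> 'a mat \<Rightarrow> 'a mat \<Rightarrow> 'a mat \<Rightarrow> 'a mat" where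
  "S_mat s e1 e2 M D X L =
     star_mat s X * M * X * L + (e1 * e2) \<cdot>\<^sub>m (star_mat s L * star_mat s X * M * X) + star_mat s X * D * X"

end

theory Submission
  imports Defs
begin

lemma st_carrier[simp]: "A \<in> carrier_mat n m \<Longrightarrow> star_mat s A \<in> carrier_mat m n"
  by (cases s) (auto simp: star_mat_def)

lemma st_mult: assumes "A \<in> carrier_mat n m" "B \<in> carrier_mat m k"
  shows "star_mat s (A*B) = star_mat s B * star_mat s A"
proof (cases s)
  case Star
  show ?thesis unfolding Star star_mat_def
    by (rule eq_matI, insert assms, auto simp: scalar_prod_def sum_conjugate conjugate_dist_mul mult.commute intro!: sum.cong)
next
  case Tr
  show ?thesis unfolding Tr star_mat_def using assms by (simp add: transpose_mult)
qed

lemma st_add: assumes "A \<in> carrier_mat n m" "B \<in> carrier_mat n m"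
  shows "star_mat s (A+B) = star_mat s A + star_mat s B"
  by (cases s; rule eq_matI, insert assms, auto simp: star_mat_def conjugate_dist_add)

lemma st_smult: "star_mat s (c \<cdot>\<^sub>m A) = (if s = Star then conjugate c else c) \<cdot>\<^sub>m star_mat s A"
  by (cases s; rule eq_matI, auto simp: star_mat_def conjugate_dist_mul)

lemma st_st[simp]: "star_mat s (star_mat s A) = A"
  by (cases s; rule eq_matI, auto simp: star_mat_def)

lemma st_zero[simp]: "star_mat s (0\<^sub>m n m) = 0\<^sub>m m n"
  by (cases s; rule eq_matI, auto simp: star_mat_def)

lemma conj_pm1: "e \<in> {1, -1} \<Longrightarrow> conjugate (e::'a::conjugatable_field) = e"
proof -
  have c1: "conjugate (1::'a) = 1"
    using conjugate_dist_mul[of "1::'a" "conjugate 1"] by simp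
  assume "e \<in> {1, -1}" thus ?thesis using c1 by (auto simp: conjugate_neg)
qed

lemma st_smult_fix: "conjugate c = c \<Longrightarrow> star_mat s (c \<cdot>\<^sub>m A) = c \<cdot>\<^sub>m star_mat s A"
  by (simp add: st_smult)

lemma sc_mid: assumes "Y \<in> carrier_mat p n" "N \<in> carrier_mat n n" "X \<in> carrier_mat n q"
  shows "Y * (c \<cdot>\<^sub>m N) * X = (c::'a::comm_ring) \<cdot>\<^sub>m (Y * N * X)"
proof -
  have "Y * (c \<cdot>\<^sub>m N) = c \<cdot>\<^sub>m (Y * N)" using mult_smult_distrib[OF assms(1,2)] .
  moreover have "(c \<cdot>\<^sub>m (Y * N)) * X = c \<cdot>\<^sub>m (Y * N * X)"
    using mult_smult_assoc_mat[of "Y*N" p n X q c] assms by auto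
  ultimately show ?thesis by simp
qed

lemma dist3r: assumes "P \<in> carrier_mat a b" "Q \<in> carrier_mat a b" "R \<in> carrier_mat a b" "L \<in> carrier_mat b c"
  shows "(P + Q + R) * L = P * L + Q * L + (R * (L::'a::comm_ring mat))"
  using add_mult_distrib_mat[OF add_carrier_mat[OF assms(2), of P] assms(3) assms(4)]
    add_mult_distrib_mat[OF assms(1,2,4)] by (simp only:)

lemma dist3l: assumes "P \<in> carrier_mat a b" "Q \<in> carrier_mat a b" "R \<in> carrier_mat a b" "L \<in> carrier_mat c a"
  shows "L * (P + Q + R) = L * P + L * Q + L * (R::'a::comm_ring mat)"
  using mult_add_distrib_mat[OF assms(4) add_carrier_mat[OF assms(2), of P] assms(3)]
    mult_add_distrib_mat[OF assms(4) assms(1,2)] by (simp only:)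

lemma st3: assumes "P \<in> carrier_mat a b" "Q \<in> carrier_mat a b" "R \<in> carrier_mat a b"
  shows "star_mat s (P + Q + R) = star_mat s P + star_mat s Q + star_mat s R"
  using st_add[OF add_carrier_mat[OF assms(2), of P] assms(3), of s] st_add[OF assms(1,2), of s] by (simp only:)

lemma smult_smult_m: "a \<cdot>\<^sub>m (b \<cdot>\<^sub>m A) = (a * b :: 'a::semigroup_mult) \<cdot>\<^sub>m A"
  by (rule eq_matI) (auto simp: mult.assoc)

lemma main_generic:
  fixes M D K X L :: "'a::conjugatable_field mat"
  assumes e1: "e1 \<in> {1, -1}" and e2: "e2 \<in> {1, -1}"
    and M: "M \<in> carrier_mat n n" and D: "D \<in> carrier_mat n n" and K: "K \<in> carrier_mat n n"
    and X: "X \<in> carrier_mat n p" and L: "L \<in> carrier_mat p p"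
    and sM: "star_mat s M = e1 \<cdot>\<^sub>m M" and sD: "star_mat s D = e2 \<cdot>\<^sub>m D" and sK: "star_mat s K = e1 \<cdot>\<^sub>m K"
    and inv: "invariant_pair M D K X L"
  shows "let S = S_mat s e1 e2 M D X L in
              star_mat s S = e2 \<cdot>\<^sub>m S \<and>
              S * L = (e1 * e2) \<cdot>\<^sub>m (star_mat s L * S) \<and>
              S * L = e1 \<cdot>\<^sub>m star_mat s (S * L)"
proof -
  have ce1: "conjugate e1 = e1" using conj_pm1[OF e1] .
  have ce2: "conjugate e2 = e2" using conj_pm1[OF e2] .
  have ce: "conjugate (e1*e2) = e1*e2" using ce1 ce2 by (simp add: conjugate_dist_mul)
  define e where "e = e1 * e2"
  define Xs where "Xs = star_mat s X"
  define Ls where "Ls = star_mat s L"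
  have Xs: "Xs \<in> carrier_mat p n" unfolding Xs_def using X by simp
  have Ls: "Ls \<in> carrier_mat p p" unfolding Ls_def using L by simp
  define A where "A = Xs * M * X"
  define B where "B = Xs * D * X"
  define C where "C = Xs * K * X"
  have A: "A \<in> carrier_mat p p" unfolding A_def using Xs M X by auto
  have B: "B \<in> carrier_mat p p" unfolding B_def using Xs D X by auto
  have C: "C \<in> carrier_mat p p" unfolding C_def using Xs K X by auto
  have sgen: "star_mat s (Xs * N * X) = Xs * star_mat s N * X" if N: "N \<in> carrier_mat n n" for N
  proof -
    have "star_mat s (Xs * N * X) = star_mat s X * star_mat s (Xs * N)"
      using st_mult[of "Xs * N" p n X p s] Xs N X by auto
    also have "\<dots> = Xs * (star_mat s N * X)"
      using st_mult[of Xs p n N n s] Xs N X by (simp add: Xs_def)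
    finally show ?thesis using assoc_mult_mat[OF Xs st_carrier[OF N, of s] X] by simp
  qed
  have sA: "star_mat s A = e1 \<cdot>\<^sub>m A"
    unfolding A_def using sgen[OF M] sM sc_mid[OF Xs M X] by simp
  have sB: "star_mat s B = e2 \<cdot>\<^sub>m B"
    unfolding B_def using sgen[OF D] sD sc_mid[OF Xs D X] by simp
  have sC: "star_mat s C = e1 \<cdot>\<^sub>m C"
    unfolding C_def using sgen[OF K] sK sc_mid[OF Xs K X] by simp
  define T1 where "T1 = A * L"
  define T2 where "T2 = Ls * A"
  define T3 where "T3 = T1 * L"
  define T4 where "T4 = B * L"
  define T5 where "T5 = T2 * L"
  define T6 where "T6 = Ls * T2"
  define T7 where "T7 = Ls * B"
  have T1: "T1 \<in> carrier_mat p p" unfolding T1_def using A L by auto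
  have T2: "T2 \<in> carrier_mat p p" unfolding T2_def using A Ls by auto
  have T3: "T3 \<in> carrier_mat p p" unfolding T3_def using T1 L by auto
  have T4: "T4 \<in> carrier_mat p p" unfolding T4_def using B L by auto
  have T5: "T5 \<in> carrier_mat p p" unfolding T5_def using T2 L by auto
  have T6: "T6 \<in> carrier_mat p p" unfolding T6_def using T2 Ls by auto
  have T7: "T7 \<in> carrier_mat p p" unfolding T7_def using B Ls by auto
  have sT1: "star_mat s T1 = e1 \<cdot>\<^sub>m T2"
    unfolding T1_def T2_def using st_mult[OF A L, of s] sA A Ls by (simp add: Ls_def mult_smult_distrib)
  have sT2: "star_mat s T2 = e1 \<cdot>\<^sub>m T1"
    unfolding T1_def T2_def using st_mult[OF Ls A, of s] sA A L by (simp add: Ls_def mult_smult_assoc_mat)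
  have LsT1: "Ls * T1 = T5" unfolding T1_def T5_def T2_def using Ls A L by simp
  have S: "S_mat s e1 e2 M D X L = T1 + e \<cdot>\<^sub>m T2 + B"
    unfolding S_mat_def T1_def T2_def A_def B_def e_def Xs_def[symmetric] Ls_def[symmetric]
    using assoc_mult_mat[OF Ls mult_carrier_mat[OF Xs M] X] assoc_mult_mat[OF Ls Xs M] by simp
  have eq1: "T3 + T4 + C = 0\<^sub>m p p"
  proof -
    have "M * X * L * L + D * X * L + K * X = 0\<^sub>m n p"
      using inv M L unfolding invariant_pair_def by simp
    hence "Xs * (M * X * L * L + D * X * L + K * X) = 0\<^sub>m p p" using Xs by simp
    moreover have "Xs * (M * X * L * L + D * X * L + K * X) = T3 + T4 + C"
    proof -
      have a1: "Xs * (M * X * L * L) = T3" unfolding T3_def T1_def A_def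
        using assoc_mult_mat[OF Xs mult_carrier_mat[OF mult_carrier_mat[OF M X] L] L]
          assoc_mult_mat[OF Xs mult_carrier_mat[OF M X] L] assoc_mult_mat[OF Xs M X]
        by simp
      have a2: "Xs * (D * X * L) = T4" unfolding T4_def B_def
        using assoc_mult_mat[OF Xs mult_carrier_mat[OF D X] L] assoc_mult_mat[OF Xs D X]
        by simp
      have a3: "Xs * (K * X) = C" unfolding C_def
        using assoc_mult_mat[OF Xs K X] by simp
      have c1: "M * X * L * L \<in> carrier_mat n p" using M X L by auto
      have c2: "D * X * L \<in> carrier_mat n p" using D X L by auto
      have c3: "K * X \<in> carrier_mat n p" using K X by auto
      show ?thesis
        using mult_add_distrib_mat[OF Xs add_carrier_mat[OF c2, of "M * X * L * L"] c3]
          mult_add_distrib_mat[OF Xs c1 c2] a1 a2 a3 by simp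
    qed
    ultimately show ?thesis by simp
  qed
  have eq2: "e1 \<cdot>\<^sub>m T6 + e2 \<cdot>\<^sub>m T7 + e1 \<cdot>\<^sub>m C = 0\<^sub>m p p"
  proof -
    have "star_mat s (T3 + T4 + C) = 0\<^sub>m p p" using eq1 by simp
    moreover have "star_mat s (T3 + T4 + C) = e1 \<cdot>\<^sub>m T6 + e2 \<cdot>\<^sub>m T7 + e1 \<cdot>\<^sub>m C"
    proof -
      have "star_mat s (T3 + T4 + C) = star_mat s T3 + star_mat s T4 + star_mat s C"
        using st_add[OF add_carrier_mat[OF T4, of T3] C, of s] st_add[OF T3 T4, of s] by (simp only:)
      also have "star_mat s T3 = Ls * (e1 \<cdot>\<^sub>m T2)"
        unfolding T3_def using st_mult[OF T1 L, of s] sT1 by (simp add: Ls_def)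
      also have "star_mat s T4 = Ls * (e2 \<cdot>\<^sub>m B)"
        unfolding T4_def using st_mult[OF B L, of s] sB by (simp add: Ls_def)
      finally show ?thesis using sC Ls T2 B
        by (simp add: mult_smult_distrib T6_def T7_def)
    qed
    ultimately show ?thesis by simp
  qed
  have SL: "(T1 + e \<cdot>\<^sub>m T2 + B) * L = T3 + e \<cdot>\<^sub>m T5 + T4"
    using dist3r[OF T1 smult_carrier_mat[OF T2] B L] mult_smult_assoc_mat[OF T2 L]
    by (simp add: T3_def T4_def T5_def)
  have LsS: "Ls * (T1 + e \<cdot>\<^sub>m T2 + B) = T5 + e \<cdot>\<^sub>m T6 + T7"
    using dist3l[OF T1 smult_carrier_mat[OF T2] B Ls] mult_smult_distrib[OF Ls T2] LsT1
    by (simp add: T6_def T7_def)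
  have sS: "star_mat s (T1 + e \<cdot>\<^sub>m T2 + B) = e1 \<cdot>\<^sub>m T2 + (e * e1) \<cdot>\<^sub>m T1 + e2 \<cdot>\<^sub>m B"
    using st3[OF T1 smult_carrier_mat[OF T2] B, of s] sT1 sT2 sB st_smult_fix[OF ce]
    by (simp add: e_def smult_smult_m)
  define S0 where "S0 = T1 + e \<cdot>\<^sub>m T2 + B"
  have S0: "S0 \<in> carrier_mat p p" unfolding S0_def using T1 T2 B by auto
  have E1: "e1 = 1 \<or> e1 = -1" and E2: "e2 = 1 \<or> e2 = -1" using e1 e2 by auto
  have G1: "star_mat s S0 = e2 \<cdot>\<^sub>m S0"
    unfolding S0_def sS
    by (rule eq_matI, insert T1 T2 B E1 E2, auto simp: e_def algebra_simps)
  have eq1ij: "T3$$(i,j) + T4$$(i,j) + C$$(i,j) = 0" if "i<p" "j<p" for i j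
    using arg_cong[OF eq1, of "\<lambda>N. N$$(i,j)"] that T3 T4 C by (simp add: add.assoc)
  have eq2ij: "e1 * T6$$(i,j) + e2 * T7$$(i,j) + e1 * C$$(i,j) = 0" if "i<p" "j<p" for i j
    using arg_cong[OF eq2, of "\<lambda>N. N$$(i,j)"] that T6 T7 C by (simp add: add.assoc)
  have G2: "S0 * L = e \<cdot>\<^sub>m (Ls * S0)"
    unfolding S0_def SL LsS
  proof (rule eq_matI)
    fix i j assume ij: "i < dim_row (e \<cdot>\<^sub>m (T5 + e \<cdot>\<^sub>m T6 + T7))" "j < dim_col (e \<cdot>\<^sub>m (T5 + e \<cdot>\<^sub>m T6 + T7))"
    hence ij': "i < p" "j < p" using T5 T6 T7 by auto
    show "(T3 + e \<cdot>\<^sub>m T5 + T4) $$ (i, j) = (e \<cdot>\<^sub>m (T5 + e \<cdot>\<^sub>m T6 + T7)) $$ (i, j)"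
    proof -
      have ee: "e * e = 1" using E1 E2 unfolding e_def by auto
      have h1: "T3$$(i,j) + T4$$(i,j) = - C$$(i,j)"
        using eq1ij[OF ij'] by (simp add: eq_neg_iff_add_eq_0)
      have "e1 * (e1 * T6$$(i,j) + e2 * T7$$(i,j) + e1 * C$$(i,j)) = 0"
        using eq2ij[OF ij'] by simp
      moreover have "e1 * e1 = 1" using E1 by auto
      ultimately have "T6$$(i,j) + e * T7$$(i,j) + C$$(i,j) = 0"
        unfolding e_def by (simp add: distrib_left mult.assoc[symmetric])
      hence h2: "T6$$(i,j) + e * T7$$(i,j) = - C$$(i,j)"
        by (simp add: eq_neg_iff_add_eq_0)
      have "(T3 + e \<cdot>\<^sub>m T5 + T4) $$ (i, j) = e * T5$$(i,j) + (T3$$(i,j) + T4$$(i,j))"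
        using ij' T3 T4 T5 by (simp add: algebra_simps)
      also have "\<dots> = e * T5$$(i,j) + (T6$$(i,j) + e * T7$$(i,j))" using h1 h2 by simp
      also have "\<dots> = e * T5$$(i,j) + ((e * e) * T6$$(i,j) + e * T7$$(i,j))" using ee by simp
      also have "\<dots> = (e \<cdot>\<^sub>m (T5 + e \<cdot>\<^sub>m T6 + T7)) $$ (i, j)"
        using ij' T5 T6 T7 by (simp add: algebra_simps)
      finally show ?thesis .
    qed
  qed (insert T3 T4 T5 T6 T7, auto)
  have G3: "S0 * L = e1 \<cdot>\<^sub>m star_mat s (S0 * L)"
  proof -
    have "star_mat s (S0 * L) = e2 \<cdot>\<^sub>m (Ls * S0)"
      using st_mult[OF S0 L, of s] G1 mult_smult_distrib[OF Ls S0] by (simp add: Ls_def)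
    thus ?thesis using G2 by (simp add: smult_smult_m e_def)
  qed
  show ?thesis using G1 G2 G3 S unfolding S0_def e_def Ls_def by (simp add: Let_def)
qed

theorem corollary2p3:
  shows "(\<forall>(s::star_op) (e1::complex) (e2::complex) (n::nat) (p::nat) (M::complex mat) (D::complex mat) (K::complex mat) (X::complex mat) (L::complex mat).
           e1 \<in> {1, -1} \<longrightarrow> e2 \<in> {1, -1} \<longrightarrow>
           M \<in> carrier_mat n n \<longrightarrow> D \<in> carrier_mat n n \<longrightarrow> K \<in> carrier_mat n n \<longrightarrow>
           X \<in> carrier_mat n p \<longrightarrow> L \<in> carrier_mat p p \<longrightarrow>
           star_mat s M = e1 \<cdot>\<^sub>m M \<longrightarrow> star_mat s D = e2 \<cdot>\<^sub>m D \<longrightarrow> star_mat s K = e1 \<cdot>\<^sub>m K \<longrightarrow>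
           invariant_pair M D K X L \<longrightarrow>
           (let S = S_mat s e1 e2 M D X L in
              star_mat s S = e2 \<cdot>\<^sub>m S \<and>
              S * L = (e1 * e2) \<cdot>\<^sub>m (star_mat s L * S) \<and>
              S * L = e1 \<cdot>\<^sub>m star_mat s (S * L)))
       \<and>
       (\<forall>(s::star_op) (e1::real) (e2::real) (n::nat) (p::nat) (M::real mat) (D::real mat) (K::real mat) (X::real mat) (L::real mat).
           e1 \<in> {1, -1} \<longrightarrow> e2 \<in> {1, -1} \<longrightarrow>
           M \<in> carrier_mat n n \<longrightarrow> D \<in> carrier_mat n n \<longrightarrow> K \<in> carrier_mat n n \<longrightarrow>
           X \<in> carrier_mat n p \<longrightarrow> L \<in> carrier_mat p p \<longrightarrow>
           star_mat s M = e1 \<cdot>\<^sub>m M \<longrightarrow> star_mat s D = e2 \<cdot>\<^sub>m D \<longrightarrow> star_mat s K = e1 \<cdot>\<^sub>m K \<longrightarrow>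
           invariant_pair M D K X L \<longrightarrow>
           (let S = S_mat s e1 e2 M D X L in
              star_mat s S = e2 \<cdot>\<^sub>m S \<and>
              S * L = (e1 * e2) \<cdot>\<^sub>m (star_mat s L * S) \<and>
              S * L = e1 \<cdot>\<^sub>m star_mat s (S * L)))"
  by (intro conjI allI impI; rule main_generic; assumption)

end
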